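(* Let $k\ge 1$, $n=2^{k+1}$, and run Jakobsson's pebble-update procedure (with its $k+1$ pebbles) for exactly $n/2$ steps. Then every pebble that has not been discarded satisfies $\mathrm{Position}=\mathrm{Destination}$.
   Context: Jakobsson's pebble-update procedure (hash-chain preimage traversal). Fix $K\ge 1$ and $N=2^K$ (in the claim, $N=n$ and $K=k+1$). There are $K$ pebbles, identified by their initial label $j\in\{1,\dots,K\}$. Pebble $j$ has two fixed constants $S_j=3\cdot 2^j$ (start increment) and $D_j=2^{j+1}$ (destination increment), and two integer fields $\mathrm{Position}$ and $\mathrm{Destination}$ (which may be set to $+\infty$). Initially $\mathrm{Position}=\mathrm{Destination}=2^j$ for pebble $j$, and a counter $c$ equals $0$. The pebbles are kept sorted by $\mathrm{Position}$, and "the first pebble" means the pebble with the smallest $\mathrm{Position}$. One step: (i) if $c=N$, stop; otherwise $c\leftarrow c+1$; (ii) for every pebble with $\mathrm{Position}\ne\mathrm{Destination}$, set $\mathrm{Position}\leftarrow\mathrm{Position}-2$; (iii) if $c$ is even, the first pebble (say with initial label $j$) makes a backward move: $\mathrm{Position}\leftarrow \mathrm{Position}+S_j$, $\mathrm{Destination}\leftarrow\mathrm{Destination}+D_j$; if the new Destination exceeds $N$, both fields are set to $+\infty$ and the pebble is said to be discarded; then the pebbles are re-sorted by $\mathrm{Position}$. (Each pebble also stores a hash-chain value, which does not influence the evolution of the Position and Destination fields.) *)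

theory Defs
  imports Main "HOL-Library.Product_Lexorder"
begin

text \<open>A pebble: its initial label j, Position, Destination, and a flag recording
  whether it has been discarded (both fields set to +infinity).\<close>
record pebble =
  lbl  :: nat
  pos  :: int
  dst  :: int
  disc :: bool

text \<open>Sort key: discarded pebbles (Position = +infinity) come after all others.\<close>
definition peb_key :: "pebble \<Rightarrow> bool \<times> int" where
  "peb_key p = (disc p, pos p)"

definition peb_sort :: "pebble list \<Rightarrow> pebble list" where
  "peb_sort ps = sort_key peb_key ps"

definition init_pebbles :: "nat \<Rightarrow> pebble list" where
  "init_pebbles K =
     peb_sort (map (\<lambda>j. \<lparr>lbl = j, pos = 2 ^ j, dst = 2 ^ j, disc = False\<rparr>) [1..<K + 1])"

text \<open>Step (ii): every pebble with Position \<noteq> Destination moves 2 to the left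
  (discarded pebbles have Position = Destination = +infinity).\<close>
definition advance :: "pebble \<Rightarrow> pebble" where
  "advance p = (if \<not> disc p \<and> pos p \<noteq> dst p then p\<lparr>pos := pos p - 2\<rparr> else p)"

definition backward :: "nat \<Rightarrow> pebble \<Rightarrow> pebble" where
  "backward N p =
     (if disc p then p
      else if dst p + 2 ^ (lbl p + 1) > int N then p\<lparr>disc := True\<rparr>
      else p\<lparr>pos := pos p + 3 * 2 ^ lbl p, dst := dst p + 2 ^ (lbl p + 1)\<rparr>)"

definition peb_step :: "nat \<Rightarrow> nat \<times> pebble list \<Rightarrow> nat \<times> pebble list" where
  "peb_step N st =
     (let (c, ps) = st in
      if c = N then (c, ps)
      else
        let c' = c + 1;
            ps1 = peb_sort (map advance ps)
        in if even c' then
             (case ps1 of [] \<Rightarrow> (c', [])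
                        | p # rest \<Rightarrow> (c', peb_sort (backward N p # rest)))
           else (c', ps1))"

definition run_steps :: "nat \<Rightarrow> nat \<Rightarrow> nat \<times> pebble list" where
  "run_steps K m = (peb_step (2 ^ K) ^^ m) (0, init_pebbles K)"

end

theory Submission
  imports Defs "HOL-Library.Multiset"
begin


lemma two_adic: "(n::nat) > 0 \<Longrightarrow> \<exists>j m. n = 2^j*(2*m+1)"
proof (induction n rule: less_induct)
  case (less n)
  show ?case
  proof (cases "even n")
    case True
    then obtain n' where n': "n = 2*n'" by blast
    with less.prems have "n' < n" "n' > 0" by auto
    with less.IH obtain j m where "n' = 2^j*(2*m+1)" by blast
    with n' have "n = 2^(Suc j)*(2*m+1)" by simp
    then show ?thesis by blast
  next
    case False
    then obtain m where "n = 2*m+1" using oddE by blast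
    then have "n = 2^0*(2*m+1)" by simp
    then show ?thesis by blast
  qed
qed

lemma odd_mult_unique_lt:
  assumes "(2::int)^i*(2*a+1) = 2^j*(2*b+1)" "i < j"
  shows False
proof -
  have "(2::int)^j = 2^i * 2^(j-i)" using assms(2) by (simp add: power_add[symmetric])
  with assms(1) have "(2::int)^i*(2*a+1) = 2^i*(2^(j-i)*(2*b+1))" by (simp add: mult.assoc)
  then have e: "2*a+1 = 2^(j-i)*(2*b+1)" by simp
  have "even ((2::int)^(j-i))" using assms(2) by simp
  then have "even (2*a+1)" unfolding e by simp
  then show False by simp
qed

lemma odd_mult_unique:
  assumes "(2::int)^i*(2*a+1) = 2^j*(2*b+1)"
  shows "i = j"
  using odd_mult_unique_lt[OF assms] odd_mult_unique_lt[OF assms[symmetric]]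
  by (cases i j rule: linorder_cases) auto

lemma window:
  fixes d t a m :: int
  assumes "d > 0" "t < d*(2*a+1)" "d*(2*a+1) \<le> t + 2*d" "t+1 = d*(2*m+1)"
  shows "a = m"
proof -
  have "d*(2*m+1) \<le> d*(2*a+1)" using assms by linarith
  then have "2*m+1 \<le> 2*a+1" using assms(1) by simp
  moreover have "d*(2*a+1) < d*(2*m+3)" using assms by (simp add: algebra_simps)
  then have "2*a+1 < 2*m+3" using assms(1) by simp
  ultimately show ?thesis by simp
qed

lemma sort_head:
  assumes "p \<in> set xs" "\<forall>q\<in>set xs. q \<noteq> p \<longrightarrow> peb_key p < peb_key q"
  shows "\<exists>rest. peb_sort xs = p # rest"
proof -
  have s: "sorted (map peb_key (peb_sort xs))" unfolding peb_sort_def by simp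
  have st: "set (peb_sort xs) = set xs" unfolding peb_sort_def by simp
  then obtain y rest where y: "peb_sort xs = y # rest" using assms(1)
    by (cases "peb_sort xs") auto
  have "y = p"
  proof (rule ccontr)
    assume ne: "y \<noteq> p"
    have "y \<in> set xs" using st y by auto
    with assms(2) ne have "peb_key p < peb_key y" by auto
    moreover have "p \<in> set rest" using st y assms(1) ne by auto
    then have "peb_key y \<le> peb_key p" using s y by auto
    ultimately show False by simp
  qed
  then show ?thesis using y by blast
qed


definition good :: "nat \<Rightarrow> nat \<Rightarrow> pebble \<Rightarrow> bool" where
"good K t p \<longleftrightarrow> \<not> disc p \<and> 1 \<le> lbl p \<and> lbl p \<le> K \<and> (\<exists>m. dst p = 2^lbl p * (2*m+1))
   \<and> int t < dst p \<and> dst p \<le> int t + 2*2^lbl p \<and> dst p \<le> 2^K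
   \<and> pos p = dst p + max 0 (2*(dst p - int t) - 3*2^lbl p)"

lemma advance_good:
  assumes "good K t p"
  shows "\<not> disc (advance p) \<and> lbl (advance p) = lbl p \<and> dst (advance p) = dst p
     \<and> pos (advance p) = dst p + max 0 (2*(dst p - int (t+1)) - 3*2^lbl p)"
proof -
  obtain m where m: "dst p = 2^lbl p * (2*m+1)" and l: "1 \<le> lbl p" and nd: "\<not> disc p"
    and ps: "pos p = dst p + max 0 (2*(dst p - int t) - 3*2^lbl p)"
    using assms unfolding good_def by blast
  have ev: "even ((2::int)^lbl p)" using l by simp
  then have "even (dst p)" using m by simp
  then have e2: "even (2*(dst p - int t) - 3*2^lbl p)" using ev by simp
  show ?thesis
  proof (cases "2*(dst p - int t) - 3*2^lbl p > 0")
    case True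
    obtain kk where kk: "2*(dst p - int t) - 3*2^lbl p = 2*kk" using e2 by (elim evenE)
    have "2*(dst p - int t) - 3*2^lbl p \<ge> 2" using True unfolding kk by presburger
    then show ?thesis using True ps nd unfolding advance_def by auto
  next
    case False
    then show ?thesis using ps nd unfolding advance_def by auto
  qed
qed


lemma lbl_adv[simp]: "lbl (advance p) = lbl p" by (simp add: advance_def)
lemma lbl_back[simp]: "lbl (backward N p) = lbl p" by (simp add: backward_def)
lemma mset_sort_map: "mset (map f (peb_sort xs)) = mset (map f xs)"
  by (simp add: peb_sort_def mset_map)
lemma set_sort[simp]: "set (peb_sort xs) = set xs" by (simp add: peb_sort_def)

lemma disc_arith:
  fixes T D H :: nat
  assumes "T = D*(2*m+1)" "T \<le> H" "2*H < T + 2*D" "D = 2^j" "H = 2^(K-1)" "K \<ge> 2"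
  shows "T = H"
proof (cases "m = 0")
  case False
  then have "D*3 \<le> D*(2*m+1)" by (intro mult_le_mono2) simp
  then show ?thesis using assms by linarith
next
  case True
  then have TD: "T = D" using assms by simp
  show ?thesis
  proof (rule ccontr)
    assume "T \<noteq> H"
    then have "D < H" using TD assms by simp
    then have "j < K - 1" using assms by simp
    then have "(2::nat)^(j+1) \<le> 2^(K-1)" by (intro power_increasing) auto
    then have "2*D \<le> H" using assms by simp
    then show False using assms TD by linarith
  qed
qed

lemma step:
  assumes K: "K \<ge> 2" and lab: "mset (map lbl ps) = mset [1..<K+1]"
    and g: "\<forall>p\<in>set ps. good K t p" and tl: "t+1 \<le> 2^(K-1)"
  shows "fst (peb_step (2^K) (t,ps)) = t+1 \<and> mset (map lbl (snd (peb_step (2^K) (t,ps)))) = mset [1..<K+1]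
    \<and> (\<forall>r\<in>set (snd (peb_step (2^K) (t,ps))). good K (t+1) r \<or> (disc r \<and> t+1 = 2^(K-1)))"
proof -
  define N :: nat where "N = 2^K"
  have HK: "(2::nat)^K = 2 * 2^(K-1)" using K by (metis Suc_diff_le diff_Suc_1 le_trans one_le_numeral power_Suc)
  have tN: "t \<noteq> N" using tl HK unfolding N_def by linarith
  define ps1 where "ps1 = peb_sort (map advance ps)"
  have unf: "peb_step N (t,ps) = (if even (t+1) then (case ps1 of [] \<Rightarrow> (t+1,[]) | p#rest \<Rightarrow> (t+1, peb_sort (backward N p # rest))) else (t+1, ps1))"
    using tN by (simp add: peb_step_def Let_def ps1_def split: list.split)
  have set1: "set ps1 = advance ` set ps" by (simp add: ps1_def)
  have lab1: "mset (map lbl ps1) = mset (map lbl ps)" unfolding ps1_def mset_sort_map by (simp add: comp_def)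
  have dist: "distinct (map lbl ps)" using mset_eq_imp_distinct_iff[OF lab] by simp
  have dist1: "distinct (map lbl ps1)" using mset_eq_imp_distinct_iff[OF lab1] dist by simp
  have injl: "inj_on lbl (set ps)" using dist by (simp add: distinct_map)
  have other: "good K (t+1) (advance p)" if "p \<in> set ps" "dst p \<noteq> int (t+1)" for p
  proof -
    have gp: "good K t p" using g that by auto
    note a = advance_good[OF gp]
    show ?thesis using gp a that(2) unfolding good_def by auto
  qed
  show ?thesis
  proof (cases "even (t+1)")
    case False
    have "good K (t+1) r" if rin: "r \<in> set ps1" for r
    proof -
      obtain p where p: "p \<in> set ps" "r = advance p" using rin set1 by auto
      have gp: "good K t p" using g p by auto
      then obtain m where m: "dst p = 2^lbl p*(2*m+1)" and l: "1 \<le> lbl p" unfolding good_def by blast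
      have "even (dst p)" using m l by simp
      moreover have "odd (int (t+1))" using False by simp
      ultimately have "dst p \<noteq> int (t+1)" by metis
      then show ?thesis using other p by simp
    qed
    then show ?thesis using unf False lab1 lab unfolding N_def by simp
  next
    case True
    obtain j m where jm: "t+1 = 2^j*(2*m+1)" using two_adic[of "t+1"] by auto
    have j0: "j \<noteq> 0" using jm True by auto
    have "2^j*1 \<le> 2^j*(2*m+1)" by (rule mult_le_mono2) simp
    then have "2^j \<le> t+1" using jm by simp
    then have "(2::nat)^j \<le> 2^(K-1)" using tl by linarith
    then have jK: "j \<le> K-1" by (simp add: power_le_imp_le_exp)
    have sl: "set (map lbl ps) = set [1..<K+1]" using mset_eq_setD[OF lab] .
    have "j \<in> set (map lbl ps)" unfolding sl set_upt using jK j0 K by simp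
    then obtain p where p: "p \<in> set ps" "lbl p = j" by auto
    have gp: "good K t p" using g p by auto
    then obtain a where a: "dst p = 2^j*(2*a+1)" and w1: "int t < dst p" and w2: "dst p \<le> int t + 2*2^j"
      unfolding good_def p(2) by blast
    have jmi: "int t + 1 = 2^j*(2*int m+1)" using arg_cong[OF jm, of int] by (simp add: algebra_simps)
    have "a = int m" using window[of "2^j" "int t" a "int m"] a w1 w2 jmi by simp
    then have dp: "dst p = int (t+1)" using a jmi by simp
    define q where "q = advance p"
    note aq = advance_good[OF gp]
    have q: "\<not> disc q" "lbl q = j" "dst q = int (t+1)" "pos q = int (t+1)"
      using aq dp p(2) unfolding q_def by auto
    have q1: "q \<in> set ps1" using set1 p q_def by auto
    have oth: "dst p' \<noteq> int (t+1)" if "p' \<in> set ps" "advance p' \<noteq> q" for p'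
    proof
      assume e: "dst p' = int (t+1)"
      have "p' \<noteq> p" using that q_def by auto
      then have ne: "lbl p' \<noteq> j" using injl that(1) p by (metis inj_on_eq_iff)
      have gp': "good K t p'" using g that by auto
      then obtain b where "dst p' = 2^lbl p'*(2*b+1)" unfolding good_def by blast
      then have "(2::int)^lbl p'*(2*b+1) = 2^j*(2*int m+1)" using e jmi by simp
      then have "lbl p' = j" by (rule odd_mult_unique)
      then show False using ne by simp
    qed
    have less: "peb_key q < peb_key r" if rin: "r \<in> set ps1" and rq: "r \<noteq> q" for r
    proof -
      obtain p' where p': "p' \<in> set ps" "r = advance p'" using rin set1 by auto
      have d: "dst p' \<noteq> int (t+1)" using oth p' rq by auto
      have gp': "good K t p'" using g p' by auto
      note ar = advance_good[OF gp']
      have "int t < dst p'" using gp' unfolding good_def by auto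
      then have "pos r > int (t+1)" using ar d p' by auto
      then show ?thesis using q ar p' unfolding peb_key_def by (simp add: less_prod_def)
    qed
    have "\<exists>rest. peb_sort (map advance ps) = q # rest"
      by (rule sort_head) (use q1 less set1 in auto)
    then obtain rest where ps1e: "ps1 = q # rest" unfolding ps1_def by blast
    have res: "peb_step N (t,ps) = (t+1, peb_sort (backward N q # rest))" using unf True ps1e by simp
    have restg: "good K (t+1) r" if "r \<in> set rest" for r
    proof -
      have "q \<notin> set rest" using dist1 ps1e by auto
      then have "r \<noteq> q" using that by auto
      moreover have "r \<in> set ps1" using ps1e that by simp
      ultimately obtain p' where "p' \<in> set ps" "r = advance p'" "advance p' \<noteq> q" using set1 by auto
      then show ?thesis using oth other by auto
    qed
    have bq: "good K (t+1) (backward N q) \<or> (disc (backward N q) \<and> t+1 = 2^(K-1))"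
    proof (cases "dst q + 2 ^ (lbl q + 1) > int N")
      case True
      then have "int N < int (t+1) + 2^(j+1)" using q by simp
      then have "int N < int ((t+1) + 2*2^j)" by simp
      then have "N < (t+1) + 2*2^j" by (simp only: of_nat_less_iff)
      then have "2 * 2^(K-1) < (t+1) + 2 * 2^j" using HK unfolding N_def by simp
      then have "t+1 = 2^(K-1)"
        using disc_arith[OF jm tl _ refl refl K] by simp
      then show ?thesis using True q unfolding backward_def by simp
    next
      case False
      have b: "backward N q = q\<lparr>pos := pos q + 3 * 2 ^ j, dst := dst q + 2 ^ (j + 1)\<rparr>"
        using False q unfolding backward_def by simp
      have "dst q + 2^(j+1) = 2^j*(2*(int m + 1)+1)" using q jmi by (simp add: algebra_simps)
      moreover have "1 \<le> j" "j \<le> K" using j0 jK by auto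
      moreover have "dst q + 2^(j+1) \<le> 2^K" using False q unfolding N_def by simp
      ultimately have h: "\<not> disc (backward N q)" "lbl (backward N q) = j"
        "dst (backward N q) = 2^j*(2*(int m + 1)+1)"
        "int (t+1) < dst (backward N q)" "dst (backward N q) \<le> int (t+1) + 2*2^j"
        "dst (backward N q) \<le> 2^K"
        "pos (backward N q) = dst (backward N q) + max 0 (2*(dst (backward N q) - int (t+1)) - 3*2^j)"
        using q unfolding b by (auto simp: algebra_simps)
      have "good K (t+1) (backward N q)" unfolding good_def h(2) using h \<open>1 \<le> j\<close> \<open>j \<le> K\<close> by blast
      then show ?thesis by blast
    qed
    have "mset (map lbl (peb_sort (backward N q # rest))) = mset [1..<K+1]"
      unfolding mset_sort_map using lab1 lab ps1e by simp
    then show ?thesis using res restg bq unfolding N_def[symmetric] by auto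
  qed
qed


lemma final_good:
  assumes K: "K \<ge> 2" and g: "good K (2^(K-1)) p"
  shows "pos p = dst p"
proof -
  define j where "j = lbl p"
  define h :: int where "h = 2^(K-1)"
  define d :: int where "d = 2^j"
  have hK: "(2::int)^K = 2*h" unfolding h_def using K
    by (metis Suc_diff_le diff_Suc_1 le_trans one_le_numeral power_Suc)
  obtain a where a: "dst p = d*(2*a+1)" and w1: "h < dst p" and w2: "dst p \<le> 2^K"
    and jK: "j \<le> K" and ps: "pos p = dst p + max 0 (2*(dst p - h) - 3*d)"
    using g unfolding good_def j_def d_def h_def by auto
  have d0: "d > 0" unfolding d_def by simp
  have "2*(dst p - h) \<le> 3*d"
  proof (cases "j \<le> K - 2")
    case True
    define e :: int where "e = 2^(K-2-j)"
    have "(2::int)^(K-1) = 2^j * 2^(K-1-j)" using True K by (simp add: power_add[symmetric])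
    moreover have "K-1-j = Suc (K-2-j)" using True K by linarith
    then have "(2::int)^(K-1-j) = 2*e" unfolding e_def by simp
    ultimately have he: "h = d*(2*e)" unfolding h_def d_def by simp
    have "d*(2*e) < d*(2*a+1)" using he a w1 by simp
    then have "2*e < 2*a+1" using d0 by simp
    moreover have "g2": "dst p \<le> h + 2*d" using g unfolding good_def j_def d_def h_def by auto
    then have "d*(2*a+1) \<le> d*(2*e+2)" using he a by (simp add: algebra_simps)
    then have "2*a+1 \<le> 2*e+2" using d0 by simp
    ultimately have "a = e" by simp
    then show ?thesis using a he d0 by (simp add: algebra_simps)
  next
    case False
    then have "j = K - 1 \<or> j = K" using jK by auto
    then show ?thesis
    proof
      assume "j = K - 1"
      then have "d = h" unfolding d_def h_def by simp
      then have "h*1 < h*(2*a+1)" using a w1 by simp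
      then have "a \<ge> 1" using d0 \<open>d = h\<close> by simp
      then have "h*3 \<le> h*(2*a+1)" using d0 \<open>d = h\<close> by (intro mult_left_mono) auto
      then have "dst p \<ge> 3*h" using a \<open>d = h\<close> by (simp add: mult.commute)
      then show ?thesis using w2 hK \<open>d = h\<close> d0 by linarith
    next
      assume "j = K"
      then have "d = 2*h" using hK unfolding d_def by simp
      moreover have "dst p \<le> 2*h" using w2 hK by simp
      ultimately show ?thesis using d0 by (simp add: algebra_simps)
    qed
  qed
  then show ?thesis using ps by simp
qed

lemma init_ok:
  shows "mset (map lbl (init_pebbles K)) = mset [1..<K+1] \<and> (\<forall>p\<in>set (init_pebbles K). good K 0 p)"
proof -
  have "mset (map lbl (init_pebbles K)) = mset [1..<K+1]"
    unfolding init_pebbles_def mset_sort_map by (simp add: comp_def)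
  moreover have "good K 0 p" if pin: "p \<in> set (init_pebbles K)" for p
  proof -
    obtain j where j: "j \<in> {1..<K+1}" "p = \<lparr>lbl = j, pos = 2 ^ j, dst = 2 ^ j, disc = False\<rparr>"
      using pin unfolding init_pebbles_def by auto
    have "(2::int)^j \<le> 2^K" using j(1) by (intro power_increasing) auto
    moreover have "(2::int)^j = 2^j*(2*0+1)" by simp
    ultimately show ?thesis using j unfolding good_def by (auto intro!: exI[of _ 0])
  qed
  ultimately show ?thesis by blast
qed

lemma inv_run:
  assumes K: "K \<ge> 2"
  shows "t < 2^(K-1) \<Longrightarrow> \<exists>ps. (peb_step (2^K) ^^ t) (0, init_pebbles K) = (t, ps)
     \<and> mset (map lbl ps) = mset [1..<K+1] \<and> (\<forall>p\<in>set ps. good K t p)"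
proof (induction t)
  case 0
  then show ?case using init_ok by simp
next
  case (Suc t)
  then obtain ps where ps: "(peb_step (2^K) ^^ t) (0, init_pebbles K) = (t, ps)"
    "mset (map lbl ps) = mset [1..<K+1]" "\<forall>p\<in>set ps. good K t p" by auto
  have S: "fst (peb_step (2^K) (t,ps)) = t+1 \<and> mset (map lbl (snd (peb_step (2^K) (t,ps)))) = mset [1..<K+1]
    \<and> (\<forall>r\<in>set (snd (peb_step (2^K) (t,ps))). good K (t+1) r \<or> (disc r \<and> t+1 = 2^(K-1)))"
    using step[OF K ps(2) ps(3)] Suc.prems by simp
  have e0: "(peb_step (2^K) ^^ Suc t) (0, init_pebbles K) = peb_step (2^K) (t,ps)"
    using ps(1) by simp
  have e: "(peb_step (2^K) ^^ Suc t) (0, init_pebbles K) = (Suc t, snd (peb_step (2^K) (t,ps)))"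
    unfolding e0 using S by (metis prod.collapse Suc_eq_plus1)
  show ?case using e S Suc.prems by auto
qed

theorem corollary1:
  fixes k n :: nat
  assumes "k \<ge> 1" and "n = 2 ^ (k + 1)"
  shows "\<forall>p \<in> set (snd (run_steps (k + 1) (n div 2))). \<not> disc p \<longrightarrow> pos p = dst p"
proof -
  define K where "K = k + 1"
  have K: "K \<ge> 2" using assms K_def by simp
  have nd: "n div 2 = 2^(K-1)" using assms K_def by simp
  define h where "h = (2::nat)^(K-1)"
  have h0: "h \<ge> 1" unfolding h_def by simp
  have hl: "h-1 < 2^(K-1)" using h0 unfolding h_def by simp
  obtain ps where ps: "(peb_step (2^K) ^^ (h-1)) (0, init_pebbles K) = (h-1, ps)"
    "mset (map lbl ps) = mset [1..<K+1]" "\<forall>p\<in>set ps. good K (h-1) p"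
    using inv_run[OF K hl] by blast
  have S: "\<forall>r\<in>set (snd (peb_step (2^K) (h-1,ps))). good K (h-1+1) r \<or> (disc r \<and> h-1+1 = 2^(K-1))"
    using step[OF K ps(2) ps(3)] h0 unfolding h_def by simp
  have hs: "h = Suc (h-1)" using h0 by simp
  have "run_steps K h = peb_step (2^K) (h-1, ps)"
    unfolding run_steps_def using ps(1) by (subst hs) simp
  then have "\<forall>r\<in>set (snd (run_steps K h)). \<not> disc r \<longrightarrow> good K (2^(K-1)) r"
    using S h0 unfolding h_def by auto
  then show ?thesis using final_good[OF K] nd unfolding K_def[symmetric] h_def by auto
qed

end
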